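(* Fix a base $\beta\ge2$ and mantissa length $t$, and let $u=\beta^{1-t}/2$. For every real matrix $A$ together with a floating-point elimination run that belongs to $\widehat{\mathbf{PP}}_n(\mathbb{R})$, there exists $B\in\mathbf{PP}_n(\mathbb{R})$ such that $b^{(k)}_{i,j}=\hat a^{(k)}_{i,j}$ whenever $i=k$ or $j=k$, and $$\big|\hat a^{(k)}_{i,j}-b^{(k)}_{i,j}\big|\le u\sum_{\ell=k}^{\min\{i,j\}-1}\Big[|\hat a^{(\ell)}_{i,j}|+|\hat a^{(\ell)}_{\ell,j}|(3+u)\Big]$$ for all $k=1,\dots,n-1$ and all $i,j\in\{k,\dots,n\}$.
   Context: Exact Gaussian elimination without pivoting on $B=(b_{i,j})$: $b^{(1)}_{i,j}=b_{i,j}$, $b^{(k+1)}_{i,j}=b^{(k)}_{i,j}-b^{(k)}_{i,k}b^{(k)}_{k,j}/b^{(k)}_{k,k}$ for $k+1\le i,j\le n$. $\mathbf{PP}_n(\mathbb{R})$ is the set of invertible real $n\times n$ matrices for which this is defined (nonzero pivots) and $|b^{(k)}_{i,k}|\le|b^{(k)}_{k,k}|$ for all $k$ and $i\ge k$. Floating-point model (overflow/underflow ignored): a floating-point elimination run on a real $n\times n$ matrix $A$ is an array of numbers $\hat a^{(k)}_{i,j}$ given by $\hat a^{(1)}_{i,j}=a_{i,j}(1+\phi^{(0)}_{i,j})$ and $\hat a^{(k+1)}_{i,j}=\big[\hat a^{(k)}_{i,j}-s_{i,k}\hat a^{(k)}_{k,j}(1+\theta^{(k)}_{i,j})\big](1+\phi^{(k)}_{i,j})$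 for $k+1\le i,j\le n$, $k=1,\dots,n-1$, where $s_{i,k}=\frac{\hat a^{(k)}_{i,k}}{\hat a^{(k)}_{k,k}}(1+\varphi_{i,k})$, for some choice of parameters with $|\theta^{(k)}_{i,j}|,|\phi^{(k)}_{i,j}|,|\varphi_{i,k}|\le u$. $\widehat{\mathbf{PP}}_n(\mathbb{R})$ consists of (invertible $A$, run) pairs such that all $\hat a^{(k)}_{k,k}\ne0$, $|\hat a^{(k)}_{i,k}|\le|\hat a^{(k)}_{k,k}|$ for all $k$ and $i\ge k$, and moreover $|s_{i,k}|\le1$ and $|s_{i,k}(1+\theta^{(k)}_{i,j})|\le1$ for all $i,j,k$. *)

theory Defs
  imports Complex_Main "Jordan_Normal_Form.Matrix"
begin

text \<open>Matrices are represented as functions nat => nat => real, with indices 1..n.\<close>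

definition to_mat :: "nat \<Rightarrow> (nat \<Rightarrow> nat \<Rightarrow> real) \<Rightarrow> real mat" where
  "to_mat n B = mat n n (\<lambda>(i, j). B (Suc i) (Suc j))"

text \<open>Exact Gaussian elimination without pivoting: ge B k = b^(k) for k >= 1
  (ge B 0 = ge B 1 = B).\<close>
fun ge :: "(nat \<Rightarrow> nat \<Rightarrow> real) \<Rightarrow> nat \<Rightarrow> nat \<Rightarrow> nat \<Rightarrow> real" where
  "ge B 0 i j = B i j"
| "ge B (Suc k) i j =
     (if k = 0 then B i j
      else ge B k i j - ge B k i k * ge B k k j / ge B k k k)"

definition PP :: "nat \<Rightarrow> (nat \<Rightarrow> nat \<Rightarrow> real) \<Rightarrow> bool" where
  "PP n B \<longleftrightarrow> invertible_mat (to_mat n B)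
     \<and> (\<forall>k\<in>{1..n}. ge B k k k \<noteq> 0)
     \<and> (\<forall>k\<in>{1..n}. \<forall>i\<in>{k..n}. \<bar>ge B k i k\<bar> \<le> \<bar>ge B k k k\<bar>)"

definition mult_s :: "(nat \<Rightarrow> nat \<Rightarrow> nat \<Rightarrow> real) \<Rightarrow> (nat \<Rightarrow> nat \<Rightarrow> real) \<Rightarrow> nat \<Rightarrow> nat \<Rightarrow> real" where
  "mult_s ah vphi i k = ah k i k / ah k k k * (1 + vphi i k)"

text \<open>ah is a floating-point elimination run on A with unit roundoff u and
  rounding parameters theta k i j, phi k i j (k = 0 for the initial rounding), vphi i k.\<close>
definition fp_run ::
  "nat \<Rightarrow> real \<Rightarrow> (nat \<Rightarrow> nat \<Rightarrow> real) \<Rightarrow> (nat \<Rightarrow> nat \<Rightarrow> nat \<Rightarrow> real)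
   \<Rightarrow> (nat \<Rightarrow> nat \<Rightarrow> nat \<Rightarrow> real) \<Rightarrow> (nat \<Rightarrow> nat \<Rightarrow> nat \<Rightarrow> real)
   \<Rightarrow> (nat \<Rightarrow> nat \<Rightarrow> real) \<Rightarrow> bool" where
  "fp_run n u A ah theta phi vphi \<longleftrightarrow>
     (\<forall>i\<in>{1..n}. \<forall>j\<in>{1..n}. ah 1 i j = A i j * (1 + phi 0 i j) \<and> \<bar>phi 0 i j\<bar> \<le> u)
   \<and> (\<forall>k\<in>{1..n-1}. \<forall>i\<in>{k+1..n}. \<bar>vphi i k\<bar> \<le> u)
   \<and> (\<forall>k\<in>{1..n-1}. \<forall>i\<in>{k+1..n}. \<forall>j\<in>{k+1..n}.
        \<bar>theta k i j\<bar> \<le> u \<and> \<bar>phi k i j\<bar> \<le> u \<and>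
        ah (k+1) i j = (ah k i j - mult_s ah vphi i k * ah k k j * (1 + theta k i j))
                         * (1 + phi k i j))"

definition PP_hat ::
  "nat \<Rightarrow> real \<Rightarrow> (nat \<Rightarrow> nat \<Rightarrow> real) \<Rightarrow> (nat \<Rightarrow> nat \<Rightarrow> nat \<Rightarrow> real)
   \<Rightarrow> (nat \<Rightarrow> nat \<Rightarrow> nat \<Rightarrow> real) \<Rightarrow> (nat \<Rightarrow> nat \<Rightarrow> nat \<Rightarrow> real)
   \<Rightarrow> (nat \<Rightarrow> nat \<Rightarrow> real) \<Rightarrow> bool" where
  "PP_hat n u A ah theta phi vphi \<longleftrightarrow>
     invertible_mat (to_mat n A)
   \<and> fp_run n u A ah theta phi vphi
   \<and> (\<forall>k\<in>{1..n}. ah k k k \<noteq> 0)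
   \<and> (\<forall>k\<in>{1..n}. \<forall>i\<in>{k..n}. \<bar>ah k i k\<bar> \<le> \<bar>ah k k k\<bar>)
   \<and> (\<forall>k\<in>{1..n-1}. \<forall>i\<in>{k+1..n}. \<forall>j\<in>{k+1..n}.
        \<bar>mult_s ah vphi i k\<bar> \<le> 1 \<and> \<bar>mult_s ah vphi i k * (1 + theta k i j)\<bar> \<le> 1)"

end

theory Submission
  imports Defs "Jordan_Normal_Form.Determinant"
begin

lemma ge_B:
  fixes ah :: "nat \<Rightarrow> nat \<Rightarrow> nat \<Rightarrow> real"
  assumes nz: "\<And>k. 1 \<le> k \<Longrightarrow> k \<le> n \<Longrightarrow> ah k k k \<noteq> 0"
  and B_def: "B = (\<lambda>i j. \<Sum>l=1..min i j. ah l i l / ah l l l * ah l l j)"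
  shows "1 \<le> k \<Longrightarrow> k \<le> i \<Longrightarrow> k \<le> j \<Longrightarrow> i \<le> n \<Longrightarrow> j \<le> n \<Longrightarrow>
     ge B k i j = (\<Sum>l=k..min i j. ah l i l / ah l l l * ah l l j)"
proof (induction k arbitrary: i j)
  case 0 thus ?case by simp
next
  case (Suc k)
  show ?case
  proof (cases "k = 0")
    case True then show ?thesis using Suc.prems by (simp add: B_def)
  next
    case False
    have kn: "1 \<le> k" "k \<le> n" using False Suc.prems by auto
    have nzk: "ah k k k \<noteq> 0" using nz kn by auto
    have IH1: "ge B k i j = (\<Sum>l=k..min i j. ah l i l / ah l l l * ah l l j)"
      using Suc.IH Suc.prems kn by auto
    have "ge B k i k = (\<Sum>l=k..min i k. ah l i l / ah l l l * ah l l k)"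
      using Suc.IH Suc.prems kn by auto
    also have "\<dots> = ah k i k" using Suc.prems nzk by (simp add: min_def)
    finally have g1: "ge B k i k = ah k i k" .
    have "ge B k k j = (\<Sum>l=k..min k j. ah l k l / ah l l l * ah l l j)"
      using Suc.IH Suc.prems kn by auto
    also have "\<dots> = ah k k j" using Suc.prems nzk by (simp add: min_def)
    finally have g2: "ge B k k j = ah k k j" .
    have "ge B k k k = (\<Sum>l=k..min k k. ah l k l / ah l l l * ah l l k)"
      using Suc.IH Suc.prems kn by auto
    also have "\<dots> = ah k k k" using Suc.prems nzk by (simp add: min_def)
    finally have g3: "ge B k k k = ah k k k" .
    have sp: "(\<Sum>l=k..min i j. ah l i l / ah l l l * ah l l j)
       = ah k i k / ah k k k * ah k k j + (\<Sum>l=Suc k..min i j. ah l i l / ah l l l * ah l l j)"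
      using Suc.prems by (subst sum.atLeast_Suc_atMost) auto
    show ?thesis using False IH1 g1 g2 g3 sp by simp
  qed
qed

lemma term_bound:
  fixes a p L s th ph vp u :: real
  assumes "\<bar>L\<bar> \<le> 1" "s = L * (1 + vp)" "\<bar>s * (1 + th)\<bar> \<le> 1"
    "\<bar>th\<bar> \<le> u" "\<bar>ph\<bar> \<le> u" "\<bar>vp\<bar> \<le> u"
  shows "\<bar>a - (a - s * p * (1 + th)) * (1 + ph) - L * p\<bar> \<le> u * (\<bar>a\<bar> + \<bar>p\<bar> * (3 + u))"
proof -
  have u0: "0 \<le> u" using assms by linarith
  have eq: "a - (a - s * p * (1 + th)) * (1 + ph) - L * p
     = L * p * (vp + th + vp * th) - ph * a + ph * (s * (1 + th)) * p"
    using assms(2) by (simp add: algebra_simps)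
  have b1: "\<bar>L * p * (vp + th + vp * th)\<bar> \<le> \<bar>p\<bar> * (2*u + u*u)"
  proof -
    have "\<bar>vp * th\<bar> \<le> u * u" unfolding abs_mult
      using assms u0 by (simp add: mult_mono')
    hence "\<bar>vp + th + vp * th\<bar> \<le> 2*u + u*u" using assms by linarith
    moreover have "\<bar>L * p\<bar> \<le> \<bar>p\<bar>" using assms(1) unfolding abs_mult
      by (simp add: mult_left_le_one_le)
    ultimately show ?thesis unfolding abs_mult[of "L*p"]
      by (simp add: mult_mono')
  qed
  have b2: "\<bar>ph * a\<bar> \<le> u * \<bar>a\<bar>" unfolding abs_mult using assms by (simp add: mult_right_mono)
  have b3: "\<bar>ph * (s * (1 + th)) * p\<bar> \<le> u * \<bar>p\<bar>"
  proof -
    have "\<bar>ph\<bar> * \<bar>s * (1 + th)\<bar> \<le> u * 1" using assms(3,5) u0 by (intro mult_mono') auto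
    hence "\<bar>ph\<bar> * \<bar>s * (1 + th)\<bar> * \<bar>p\<bar> \<le> u * \<bar>p\<bar>"
      by (simp add: mult_right_mono)
    thus ?thesis by (simp only: abs_mult[of "ph * (s * (1 + th))" p] abs_mult[of ph "s * (1 + th)"])
  qed
  have "\<bar>a - (a - s * p * (1 + th)) * (1 + ph) - L * p\<bar>
     \<le> \<bar>p\<bar> * (2*u + u*u) + u * \<bar>a\<bar> + u * \<bar>p\<bar>"
    unfolding eq using b1 b2 b3 by linarith
  also have "\<dots> = u * (\<bar>a\<bar> + \<bar>p\<bar> * (3 + u))" by (simp add: algebra_simps)
  finally show ?thesis .
qed

lemma to_mat_factor:
  fixes ah :: "nat \<Rightarrow> nat \<Rightarrow> nat \<Rightarrow> real"
  shows "to_mat n (\<lambda>i j. \<Sum>l=1..min i j. ah l i l / ah l l l * ah l l j)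
    = mat n n (\<lambda>(i,j). if j \<le> i then ah (Suc j) (Suc i) (Suc j) / ah (Suc j) (Suc j) (Suc j) else 0)
    * mat n n (\<lambda>(i,j). if i \<le> j then ah (Suc i) (Suc i) (Suc j) else 0)"
    (is "_ = ?L * ?U")
proof (rule eq_matI)
  fix i j assume ij: "i < dim_row (?L * ?U)" "j < dim_col (?L * ?U)"
  hence i: "i < n" and j: "j < n" by auto
  define F where "F = (\<lambda>l. ah l (Suc i) l / ah l l l * ah l l (Suc j))"
  have "(?L * ?U) $$ (i, j) = (\<Sum>r\<in>{0..<n}. ?L $$ (i, r) * ?U $$ (r, j))"
    using i j by (simp add: scalar_prod_def)
  also have "\<dots> = (\<Sum>r\<in>{0..<n}. if r \<le> min i j then F (Suc r) else 0)"
    using i j by (intro sum.cong[OF refl]) (auto simp: F_def)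
  also have "\<dots> = (\<Sum>r\<in>{0..min i j}. if r \<le> min i j then F (Suc r) else 0)"
    using i j by (intro sum.mono_neutral_right) auto
  also have "\<dots> = (\<Sum>r\<in>{0..min i j}. F (Suc r))" by (intro sum.cong[OF refl]) auto
  also have "\<dots> = (\<Sum>l\<in>{Suc 0..Suc (min i j)}. F l)"
    by (rule sum.shift_bounds_cl_Suc_ivl[symmetric])
  also have "\<dots> = to_mat n (\<lambda>i j. \<Sum>l=1..min i j. ah l i l / ah l l l * ah l l j) $$ (i, j)"
    using i j by (simp add: to_mat_def F_def)
  finally show "to_mat n (\<lambda>i j. \<Sum>l=1..min i j. ah l i l / ah l l l * ah l l j) $$ (i, j)
     = (?L * ?U) $$ (i, j)" by simp
qed (auto simp: to_mat_def)

lemma factor_invertible: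
  fixes ah :: "nat \<Rightarrow> nat \<Rightarrow> nat \<Rightarrow> real"
  assumes nz: "\<And>k. 1 \<le> k \<Longrightarrow> k \<le> n \<Longrightarrow> ah k k k \<noteq> 0"
  shows "invertible_mat (mat n n (\<lambda>(i,j). if j \<le> i then ah (Suc j) (Suc i) (Suc j) / ah (Suc j) (Suc j) (Suc j) else 0)
    * mat n n (\<lambda>(i,j). if i \<le> j then ah (Suc i) (Suc i) (Suc j) else 0))"
    (is "invertible_mat (?L * ?U)")
proof -
  have L: "?L \<in> carrier_mat n n" and U: "?U \<in> carrier_mat n n" by auto
  have dL: "det ?L = prod_list (diag_mat ?L)"
    by (rule det_lower_triangular[OF _ L]) auto
  have dU: "det ?U = prod_list (diag_mat ?U)"
    by (rule det_upper_triangular[OF _ U]) (auto simp: upper_triangular_def)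
  have "0 \<notin> set (diag_mat ?L)" using nz by (auto simp: diag_mat_def)
  hence "det ?L \<noteq> 0" unfolding dL by (simp add: prod_list_zero_iff)
  moreover have "0 \<notin> set (diag_mat ?U)" using nz by (auto simp: diag_mat_def)
  hence "det ?U \<noteq> 0" unfolding dU by (simp add: prod_list_zero_iff)
  ultimately have d: "det (?L * ?U) \<noteq> 0" by (simp add: det_mult[OF L U])
  have LU: "?L * ?U \<in> carrier_mat n n" by auto
  from det_non_zero_imp_unit[OF LU d, of undefined]
  obtain B where B: "B \<in> carrier_mat n n" "B * (?L * ?U) = 1\<^sub>m n" "(?L * ?U) * B = 1\<^sub>m n"
    unfolding Units_def ring_mat_def by auto
  show ?thesis unfolding invertible_mat_def inverts_mat_def using B LU
    by (intro conjI exI[of _ B]) auto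
qed

theorem mainTheorem8:
  fixes \<beta> t n :: nat and u :: real
    and A :: "nat \<Rightarrow> nat \<Rightarrow> real"
    and ah theta phi :: "nat \<Rightarrow> nat \<Rightarrow> nat \<Rightarrow> real"
    and vphi :: "nat \<Rightarrow> nat \<Rightarrow> real"
  assumes "\<beta> \<ge> 2" and "t \<ge> 1"
    and "u = real \<beta> powr (1 - real t) / 2"
    and "PP_hat n u A ah theta phi vphi"
  shows "\<exists>B. PP n B
    \<and> (\<forall>k\<in>{1..n}. \<forall>i\<in>{k..n}. \<forall>j\<in>{k..n}. (i = k \<or> j = k) \<longrightarrow> ge B k i j = ah k i j)
    \<and> (\<forall>k\<in>{1..n-1}. \<forall>i\<in>{k..n}. \<forall>j\<in>{k..n}.
         \<bar>ah k i j - ge B k i j\<bar>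
           \<le> u * (\<Sum>l = k..<min i j. \<bar>ah l i j\<bar> + \<bar>ah l l j\<bar> * (3 + u)))"
proof -
  from assms(4) have inv: "invertible_mat (to_mat n A)" and run: "fp_run n u A ah theta phi vphi"
    and nz: "\<forall>k\<in>{1..n}. ah k k k \<noteq> 0"
    and piv: "\<forall>k\<in>{1..n}. \<forall>i\<in>{k..n}. \<bar>ah k i k\<bar> \<le> \<bar>ah k k k\<bar>"
    and ms: "\<forall>k\<in>{1..n-1}. \<forall>i\<in>{k+1..n}. \<forall>j\<in>{k+1..n}.
        \<bar>mult_s ah vphi i k\<bar> \<le> 1 \<and> \<bar>mult_s ah vphi i k * (1 + theta k i j)\<bar> \<le> 1"
    unfolding PP_hat_def by auto
  define B where "B = (\<lambda>i j. \<Sum>l=1..min i j. ah l i l / ah l l l * ah l l j)"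
  have nz': "\<And>k. 1 \<le> k \<Longrightarrow> k \<le> n \<Longrightarrow> ah k k k \<noteq> 0" using nz by auto
  note geB = ge_B[OF nz' B_def]
  have diag: "\<And>m. 1 \<le> m \<Longrightarrow> m \<le> n \<Longrightarrow> m \<le> i \<Longrightarrow> m \<le> j \<Longrightarrow> (i = m \<or> j = m) \<Longrightarrow>
      ah m i m / ah m m m * ah m m j = ah m i j" for i j
    using nz' by auto
  have edge: "\<And>k i j. k\<in>{1..n} \<Longrightarrow> i\<in>{k..n} \<Longrightarrow> j\<in>{k..n} \<Longrightarrow> i = k \<or> j = k \<Longrightarrow>
      ge B k i j = ah k i j"
  proof -
    fix k i j assume h: "k\<in>{1..n}" "i\<in>{k..n}" "j\<in>{k..n}" "i = k \<or> j = k"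
    hence mk: "min i j = k" by auto
    have "ge B k i j = (\<Sum>l=k..min i j. ah l i l / ah l l l * ah l l j)" using h by (intro geB) auto
    also have "\<dots> = ah k i k / ah k k k * ah k k j" unfolding mk by simp
    also have "\<dots> = ah k i j" using h by (intro diag) auto
    finally show "ge B k i j = ah k i j" .
  qed
  have PPB: "PP n B"
    unfolding PP_def
  proof (intro conjI ballI)
    show "invertible_mat (to_mat n B)" unfolding B_def to_mat_factor
      by (rule factor_invertible[OF nz'])
  next
    fix k assume "k \<in> {1..n}" thus "ge B k k k \<noteq> 0" using edge[of k k k] nz by auto
  next
    fix k i assume "k \<in> {1..n}" "i \<in> {k..n}"
    thus "\<bar>ge B k i k\<bar> \<le> \<bar>ge B k k k\<bar>" using edge[of k i k] edge[of k k k] piv by auto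
  qed
  have bound: "\<bar>ah k i j - ge B k i j\<bar>
           \<le> u * (\<Sum>l = k..<min i j. \<bar>ah l i j\<bar> + \<bar>ah l l j\<bar> * (3 + u))"
    if h: "k\<in>{1..n-1}" "i\<in>{k..n}" "j\<in>{k..n}" for k i j
  proof -
    define m where "m = min i j"
    have km: "k \<le> m" "m \<le> n" "1 \<le> m" using h by (auto simp: m_def)
    define T where "T = (\<lambda>l. ah l i l / ah l l l * ah l l j)"
    have "ge B k i j = (\<Sum>l=k..m. T l)" using h by (simp add: geB T_def m_def)
    also have "\<dots> = (\<Sum>l=k..<m. T l) + T m"
      using km by (simp add: atLeastLessThanSuc_atLeastAtMost[symmetric] sum.atLeastLessThan_Suc)
    also have "T m = ah m i j" unfolding T_def using km h by (intro diag) (auto simp: m_def)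
    finally have g: "ge B k i j = (\<Sum>l=k..<m. T l) + ah m i j" .
    have tel: "ah k i j - ah m i j = (\<Sum>l=k..<m. ah l i j - ah (Suc l) i j)"
    proof -
      have "(\<Sum>l=k..<m. ah l i j - ah (Suc l) i j) = - (\<Sum>l=k..<m. ah (Suc l) i j - ah l i j)"
        by (simp add: sum_negf[symmetric])
      thus ?thesis using sum_Suc_diff'[OF km(1), of "\<lambda>l. ah l i j"] by simp
    qed
    have "ah k i j - ge B k i j = (\<Sum>l=k..<m. ah l i j - ah (Suc l) i j - T l)"
      using g tel by (simp add: sum_subtractf)
    hence "\<bar>ah k i j - ge B k i j\<bar> \<le> (\<Sum>l=k..<m. \<bar>ah l i j - ah (Suc l) i j - T l\<bar>)"
      by (simp add: sum_abs)
    also have "\<dots> \<le> (\<Sum>l=k..<m. u * (\<bar>ah l i j\<bar> + \<bar>ah l l j\<bar> * (3 + u)))"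
    proof (rule sum_mono)
      fix l assume l: "l \<in> {k..<m}"
      have l1: "l \<in> {1..n-1}" and i1: "i \<in> {l+1..n}" and j1: "j \<in> {l+1..n}"
        using l h km by (auto simp: m_def)
      from run l1 i1 j1 have r: "\<bar>theta l i j\<bar> \<le> u" "\<bar>phi l i j\<bar> \<le> u"
        "ah (l+1) i j = (ah l i j - mult_s ah vphi i l * ah l l j * (1 + theta l i j)) * (1 + phi l i j)"
        "\<bar>vphi i l\<bar> \<le> u"
        unfolding fp_run_def by auto
      have lp: "\<bar>ah l i l\<bar> \<le> \<bar>ah l l l\<bar>" "ah l l l \<noteq> 0" using piv nz l1 i1 by auto
      hence L1: "\<bar>ah l i l / ah l l l\<bar> \<le> 1" by (simp add: abs_divide divide_le_eq_1)
      have m1: "\<bar>mult_s ah vphi i l * (1 + theta l i j)\<bar> \<le> 1" using ms l1 i1 j1 by auto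
      have "\<bar>ah l i j - (ah l i j - mult_s ah vphi i l * ah l l j * (1 + theta l i j)) * (1 + phi l i j)
          - ah l i l / ah l l l * ah l l j\<bar> \<le> u * (\<bar>ah l i j\<bar> + \<bar>ah l l j\<bar> * (3 + u))"
        by (rule term_bound[OF L1 _ m1 r(1,2,4)]) (simp add: mult_s_def)
      thus "\<bar>ah l i j - ah (Suc l) i j - T l\<bar> \<le> u * (\<bar>ah l i j\<bar> + \<bar>ah l l j\<bar> * (3 + u))"
        using r(3) by (simp add: T_def)
    qed
    also have "\<dots> = u * (\<Sum>l = k..<min i j. \<bar>ah l i j\<bar> + \<bar>ah l l j\<bar> * (3 + u))"
      by (simp add: sum_distrib_left m_def)
    finally show ?thesis .
  qed
  show ?thesis using PPB edge bound by blast
qed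

end
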